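(* Let $\kappa>0$, $b>0$, $m>7/2$, and let $n\in\mathfrak D\cap H^m(C(\pi))$ with $\|n\|_{H^m}\le C_m$. Then the matrix function $\mathcal Q$ associated with $n$ satisfies $$\|\mathcal Q(x)\|_2\le15(1+\kappa^2)\,b^{-2}(L_mC_m)^2\qquad\text{for all }x\in B(\pi),$$ where $\|\cdot\|_2$ is the spectral norm on $\mathbb C^{6\times6}$.
   Context: $B(r)$ is the open ball of radius $r$ about $0$ in $\mathbb R^3$, $C(\pi)=(-\pi,\pi)^3$. For a fixed $\alpha_0\in(0,1)$, $\mathfrak D:=\{n\in C^{1,\alpha_0}(\mathbb R^3;\mathbb C):\ \mathrm{supp}(1-n)\subset B(\pi),\ \mathrm{Re}(n)\ge b,\ \mathrm{Im}(n)\ge0\}$. For $f$ on $C(\pi)$, $\hat f(\gamma)=(2\pi)^{-3/2}\int_{C(\pi)}f(x)e^{-i\gamma\cdot x}dx$ and $\|f\|^2_{H^m}:=\sum_{\gamma\in\mathbb Z^3}(1+|\gamma|^2)^m|\hat f(\gamma)|^2$. $L_m$ is a constant with $L_m\|f\|_{H^m(C(\pi))}\ge\max_{|\alpha|\le2}\sup_{x\in C(\pi)}|\partial^\alpha f(x)|$ for all $f\in H^m(C(\pi))$. The matrix $\mathcal Q(x)\in\mathbb C^{6\times6}$ is $$\mathcal Q=\kappa^2(1-n)1_6+\frac{i\kappa}{\sqrt n}\begin{pmatrix}0_3&-(\nabla n\times)\\(\nabla n\times)&0_3\end{pmatrix}+\begin{pmatrix}-D\big(\frac{\nabla n}{n}\big)+(n^{-1/2}\Delta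 n^{1/2})1_3&0_3\\0_3&0_3\end{pmatrix},$$ where $1_k,0_k$ are the $k\times k$ identity and zero matrices, $n^{1/2}$ is the principal square root, $D(V)$ is the Jacobian matrix of a vector field $V$, and $(\nabla n\times)$ is the matrix $\begin{pmatrix}0&-\partial_zn&\partial_yn\\\partial_zn&0&-\partial_xn\\-\partial_yn&\partial_xn&0\end{pmatrix}$. *)

theory Defs
  imports "HOL-Analysis.Analysis"
begin

definition cubeC :: "(real^3) set" where
  "cubeC = box (- (\<chi> i. pi)) (\<chi> i. pi)"

definition Z3 :: "(real^3) set" where
  "Z3 = {\<gamma>. \<forall>i. \<gamma> $ i \<in> \<int>}"

definition fcoeff :: "(real^3 \<Rightarrow> complex) \<Rightarrow> real^3 \<Rightarrow> complex" where
  "fcoeff f \<gamma> = complex_of_real ((2*pi) powr (-3/2)) *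
     integral cubeC (\<lambda>x. f x * exp (- \<i> * complex_of_real (\<gamma> \<bullet> x)))"

definition Hm_weight :: "real \<Rightarrow> (real^3 \<Rightarrow> complex) \<Rightarrow> real^3 \<Rightarrow> real" where
  "Hm_weight m f \<gamma> = (1 + (norm \<gamma>)\<^sup>2) powr m * (cmod (fcoeff f \<gamma>))\<^sup>2"

definition in_Hm :: "real \<Rightarrow> (real^3 \<Rightarrow> complex) \<Rightarrow> bool" where
  "in_Hm m f \<longleftrightarrow> f measurable_on cubeC \<and>
     (\<lambda>x. (cmod (f x))\<^sup>2) integrable_on cubeC \<and>
     Hm_weight m f summable_on Z3"

definition Hm_norm :: "real \<Rightarrow> (real^3 \<Rightarrow> complex) \<Rightarrow> real" where
  "Hm_norm m f = sqrt (infsum (Hm_weight m f) Z3)"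

definition pd :: "3 \<Rightarrow> (real^3 \<Rightarrow> complex) \<Rightarrow> real^3 \<Rightarrow> complex" where
  "pd i f x = vector_derivative (\<lambda>t. f (x + t *\<^sub>R axis i 1)) (at 0)"

definition C1_fun :: "(real^3 \<Rightarrow> complex) \<Rightarrow> bool" where
  "C1_fun f \<longleftrightarrow> (\<forall>i x. (\<lambda>t. f (x + t *\<^sub>R axis i 1)) differentiable (at 0)) \<and>
     continuous_on UNIV f \<and> (\<forall>i. continuous_on UNIV (pd i f))"

definition C1alpha :: "real \<Rightarrow> (real^3 \<Rightarrow> complex) \<Rightarrow> bool" where
  "C1alpha \<alpha> f \<longleftrightarrow> C1_fun f \<and> bounded (range f) \<and> (\<forall>i. bounded (range (pd i f))) \<and>
     (\<exists>M. \<forall>i x y. cmod (pd i f x - pd i f y) \<le> M * (dist x y) powr \<alpha>)"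

definition C2_fun :: "(real^3 \<Rightarrow> complex) \<Rightarrow> bool" where
  "C2_fun f \<longleftrightarrow> C1_fun f \<and> (\<forall>j. C1_fun (pd j f))"

definition admissible :: "real \<Rightarrow> real \<Rightarrow> (real^3 \<Rightarrow> complex) \<Rightarrow> bool" where
  "admissible \<alpha>0 b n \<longleftrightarrow> C1alpha \<alpha>0 n \<and> closure {x. n x \<noteq> 1} \<subseteq> ball 0 pi \<and>
     (\<forall>x. Re (n x) \<ge> b \<and> Im (n x) \<ge> 0)"

definition sobolev_const :: "real \<Rightarrow> real \<Rightarrow> bool" where
  "sobolev_const m L \<longleftrightarrow> (\<forall>f. in_Hm m f \<and> C2_fun f \<longrightarrow>
     (\<forall>x\<in>cubeC. cmod (f x) \<le> L * Hm_norm m f \<and>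
        (\<forall>i. cmod (pd i f x) \<le> L * Hm_norm m f) \<and>
        (\<forall>i j. cmod (pd i (pd j f) x) \<le> L * Hm_norm m f)))"

definition grad :: "(real^3 \<Rightarrow> complex) \<Rightarrow> real^3 \<Rightarrow> complex^3" where
  "grad f x = (\<chi> i. pd i f x)"

definition jac :: "(real^3 \<Rightarrow> complex^3) \<Rightarrow> real^3 \<Rightarrow> complex^3^3" where
  "jac V x = (\<chi> k l. pd l (\<lambda>y. V y $ k) x)"

definition crossmat :: "complex^3 \<Rightarrow> complex^3^3" where
  "crossmat w = (\<chi> k l.
     if k = 1 \<and> l = 2 then - w$3 else if k = 1 \<and> l = 3 then w$2 else
     if k = 2 \<and> l = 1 then w$3 else if k = 2 \<and> l = 3 then - w$1 else
     if k = 3 \<and> l = 1 then - w$2 else if k = 3 \<and> l = 2 then w$1 else 0)"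

definition laplace :: "(real^3 \<Rightarrow> complex) \<Rightarrow> real^3 \<Rightarrow> complex" where
  "laplace f x = (\<Sum>i\<in>UNIV. pd i (pd i f) x)"

text \<open>The 6x6 matrix Q(x), written as a 2x2 block matrix of 3x3 blocks acting on
  C^6 = C^3 \<times> C^3 (Euclidean norm).\<close>
definition Qop :: "real \<Rightarrow> (real^3 \<Rightarrow> complex) \<Rightarrow> real^3 \<Rightarrow> (complex^3) \<times> (complex^3) \<Rightarrow> (complex^3) \<times> (complex^3)" where
  "Qop \<kappa> n x = (let
      d = complex_of_real (\<kappa>\<^sup>2) * (1 - n x);
      c = \<i> * complex_of_real \<kappa> / csqrt (n x);
      N = crossmat (grad n x);
      A11 = mat d + ((- jac (\<lambda>y. \<chi> k. grad n y $ k / n y) x)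
              + mat (laplace (\<lambda>y. csqrt (n y)) x / csqrt (n x)));
      A12 = (\<chi> k l. - c * N $ k $ l);
      A21 = (\<chi> k l. c * N $ k $ l);
      A22 = mat d
    in (\<lambda>(E, H). (A11 *v E + A12 *v H, A21 *v E + A22 *v H)))"

text \<open>Spectral norm of Q(x): operator norm w.r.t. the Euclidean norm on C^6 = C^3 \<times> C^3.\<close>
definition Q_spec_norm :: "real \<Rightarrow> (real^3 \<Rightarrow> complex) \<Rightarrow> real^3 \<Rightarrow> real" where
  "Q_spec_norm \<kappa> n x = onorm (Qop \<kappa> n x)"

end

theory Submission
  imports Defs
begin


lemma mat_diag_bound: "norm (mat d *v (E::complex^3)) \<le> cmod d * norm E"
proof -
  have "mat d *v E = (\<chi> k. d * E $ k)"
    unfolding vec_eq_iff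
  proof
    fix k :: 3
    show "(mat d *v E) $ k = (\<chi> k. d * E $ k) $ k"
      using exhaust_3[of k] by (auto simp: matrix_vector_mult_def mat_def sum_3)
  qed
  also have "norm \<dots> = cmod d * norm E"
    by (simp add: norm_vec_def L2_set_def sum_3 norm_mult power_mult_distrib
         real_sqrt_mult flip: distrib_left)
  finally show ?thesis by simp
qed


lemma three_sq: "((a::real)+b+c)\<^sup>2 \<le> 3*(a\<^sup>2+b\<^sup>2+c\<^sup>2)"
proof -
  have "0 \<le> (a-b)\<^sup>2 + (b-c)\<^sup>2 + (a-c)\<^sup>2" by simp
  thus ?thesis by (simp add: power2_eq_square algebra_simps)
qed

lemma tri3: "cmod (a+b+c) \<le> cmod a + cmod b + cmod c"
proof -
  have "cmod (a+b+c) \<le> cmod (a+b) + cmod c" by (rule norm_triangle_ineq)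
  moreover have "cmod (a+b) \<le> cmod a + cmod b" by (rule norm_triangle_ineq)
  ultimately show ?thesis by linarith
qed

lemma norm3_sq: "(norm (v::complex^3))\<^sup>2 = (cmod (v$1))\<^sup>2 + (cmod (v$2))\<^sup>2 + (cmod (v$3))\<^sup>2"
  by (simp add: norm_vec_def L2_set_def sum_3 add_nonneg_nonneg)

lemma mat_entry_bound:
  fixes A :: "complex^3^3"
  assumes "\<And>k l. cmod (A $ k $ l) \<le> K"
  shows "norm (A *v (x::complex^3)) \<le> 3 * K * norm x"
proof -
  have K0: "0 \<le> K" using assms[of 1 1] by (meson norm_ge_zero order_trans)
  define s where "s = cmod (x$1) + cmod (x$2) + cmod (x$3)"
  have row: "cmod ((A *v x) $ k) \<le> K * s" for k
  proof -
    have e: "(A *v x) $ k = A$k$1 * x$1 + A$k$2 * x$2 + A$k$3 * x$3"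
      by (simp add: matrix_vector_mult_def sum_3)
    have "cmod ((A *v x) $ k) \<le> cmod (A$k$1) * cmod (x$1) + cmod (A$k$2) * cmod (x$2) + cmod (A$k$3) * cmod (x$3)"
      unfolding e by (rule order_trans[OF tri3]) (simp add: norm_mult)
    also have "\<dots> \<le> K * cmod (x$1) + K * cmod (x$2) + K * cmod (x$3)"
      by (intro add_mono mult_right_mono assms) auto
    finally show ?thesis by (simp add: s_def algebra_simps)
  qed
  have sq: "(cmod ((A *v x) $ k))\<^sup>2 \<le> K\<^sup>2 * s\<^sup>2" for k
  proof -
    have "(cmod ((A *v x) $ k))\<^sup>2 \<le> (K * s)\<^sup>2" by (rule power_mono[OF row]) simp
    thus ?thesis by (simp add: power_mult_distrib)
  qed
  have s2: "s\<^sup>2 \<le> 3 * ((cmod (x$1))\<^sup>2 + (cmod (x$2))\<^sup>2 + (cmod (x$3))\<^sup>2)"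
    unfolding s_def by (rule three_sq)
  have "(norm (A *v x))\<^sup>2 \<le> (3 * K * norm x)\<^sup>2"
  proof -
    have "(norm (A *v x))\<^sup>2 = (cmod ((A *v x) $ 1))\<^sup>2 + (cmod ((A *v x) $ 2))\<^sup>2 + (cmod ((A *v x) $ 3))\<^sup>2"
      by (rule norm3_sq)
    also have "\<dots> \<le> 3 * (K\<^sup>2 * s\<^sup>2)" using sq[of 1] sq[of 2] sq[of 3] by linarith
    also have "\<dots> \<le> 3 * (K\<^sup>2 * (3 * ((cmod (x$1))\<^sup>2 + (cmod (x$2))\<^sup>2 + (cmod (x$3))\<^sup>2)))"
      using s2 by (intro mult_left_mono) auto
    also have "\<dots> = 9 * K\<^sup>2 * (norm x)\<^sup>2" by (simp add: norm3_sq)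
    also have "\<dots> = (3 * K * norm x)\<^sup>2" by (simp add: power_mult_distrib)
    finally show ?thesis .
  qed
  moreover have "0 \<le> 3 * K * norm x" using K0 by simp
  ultimately show ?thesis by (rule power2_le_imp_le)
qed


lemma norm_pair_le: "norm (a, b) \<le> norm a + norm b"
  by (simp add: norm_prod_def sqrt_sum_squares_le_sum)

lemma block_bound:
  fixes J N :: "complex^3^3" and E H :: "complex^3"
  assumes J: "\<And>k l. cmod (J$k$l) \<le> KJ" and N: "\<And>k l. cmod (N$k$l) \<le> KN"
  shows "norm ((mat d + (- J + mat l)) *v E + (\<chi> k l. - c * N $ k $ l) *v H,
                (\<chi> k l. c * N $ k $ l) *v E + mat d *v H)
         \<le> (2*cmod d + 3*KJ + cmod l + 6*cmod c*KN) * norm (E,H)"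
proof -
  define \<nu> where "\<nu> = norm (E,H)"
  have nE: "norm E \<le> \<nu>" unfolding \<nu>_def by (rule norm_fst_le)
  have nH: "norm H \<le> \<nu>" unfolding \<nu>_def by (rule norm_snd_le)
  have KJ0: "0 \<le> KJ" using J[of 1 1] by (meson norm_ge_zero order_trans)
  have KN0: "0 \<le> KN" using N[of 1 1] by (meson norm_ge_zero order_trans)
  have b1: "norm ((- J) *v E) \<le> 3 * KJ * norm E"
    by (rule mat_entry_bound) (simp add: J)
  have b2: "norm ((\<chi> k l. - c * N $ k $ l) *v H) \<le> 3 * (cmod c * KN) * norm H"
    by (rule mat_entry_bound) (simp add: norm_mult N mult_left_mono)
  have b3: "norm ((\<chi> k l. c * N $ k $ l) *v E) \<le> 3 * (cmod c * KN) * norm E"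
    by (rule mat_entry_bound) (simp add: norm_mult N mult_left_mono)
  have b4: "norm (mat d *v E) \<le> cmod d * norm E" by (rule mat_diag_bound)
  have b5: "norm (mat d *v H) \<le> cmod d * norm H" by (rule mat_diag_bound)
  have b6: "norm (mat l *v E) \<le> cmod l * norm E" by (rule mat_diag_bound)
  have f1: "norm ((mat d + (- J + mat l)) *v E + (\<chi> k l. - c * N $ k $ l) *v H)
     \<le> cmod d * \<nu> + 3 * KJ * \<nu> + cmod l * \<nu> + 3 * (cmod c * KN) * \<nu>"
  proof -
    have "norm ((mat d + (- J + mat l)) *v E + (\<chi> k l. - c * N $ k $ l) *v H)
      \<le> norm (mat d *v E) + norm ((- J) *v E) + norm (mat l *v E) + norm ((\<chi> k l. - c * N $ k $ l) *v H)"
      unfolding matrix_vector_mult_add_rdistrib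
      by (smt (verit) norm_triangle_ineq)
    also have "\<dots> \<le> cmod d * \<nu> + 3 * KJ * \<nu> + cmod l * \<nu> + 3 * (cmod c * KN) * \<nu>"
      using b1 b2 b4 b6 nE nH
        mult_left_mono[OF nE, of "cmod d"] mult_left_mono[OF nE, of "3*KJ"]
        mult_left_mono[OF nE, of "cmod l"] mult_left_mono[OF nH, of "3 * (cmod c * KN)"]
        KJ0 KN0 by simp
    finally show ?thesis .
  qed
  have f2: "norm ((\<chi> k l. c * N $ k $ l) *v E + mat d *v H) \<le> 3 * (cmod c * KN) * \<nu> + cmod d * \<nu>"
  proof -
    have "norm ((\<chi> k l. c * N $ k $ l) *v E + mat d *v H) \<le> norm ((\<chi> k l. c * N $ k $ l) *v E) + norm (mat d *v H)"
      by (rule norm_triangle_ineq)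
    also have "\<dots> \<le> 3 * (cmod c * KN) * \<nu> + cmod d * \<nu>"
      using b3 b5 mult_left_mono[OF nE, of "3 * (cmod c * KN)"] mult_left_mono[OF nH, of "cmod d"] KN0
      by simp
    finally show ?thesis .
  qed
  show ?thesis
    apply (rule order_trans[OF norm_pair_le])
    using f1 f2 unfolding \<nu>_def[symmetric] by (simp add: algebra_simps)
qed


lemma pd_has: "C1_fun f \<Longrightarrow> ((\<lambda>t. f (x + t *\<^sub>R axis i 1)) has_vector_derivative pd i f x) (at 0)"
  unfolding C1_fun_def pd_def using vector_derivative_works by blast

lemma pd_eqI: "((\<lambda>t. f (x + t *\<^sub>R axis i 1)) has_vector_derivative D) (at 0) \<Longrightarrow> pd i f x = D"
  unfolding pd_def by (rule vector_derivative_at)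

lemma inv_line:
  assumes "C1_fun f" "f x \<noteq> 0"
  shows "((\<lambda>t. inverse (f (x + t *\<^sub>R axis i 1))) has_vector_derivative
           pd i f x * (- (inverse (f x) ^ Suc (Suc 0)))) (at 0)"
proof -
  have "(inverse has_field_derivative - (inverse (f x) ^ Suc (Suc 0))) (at ((\<lambda>t. f (x + t *\<^sub>R axis i 1)) 0))"
    using DERIV_inverse[OF assms(2)] by simp
  from field_vector_diff_chain_at[OF pd_has[OF assms(1)] this]
  show ?thesis by (simp add: o_def)
qed

lemma sqrt_line:
  assumes "C1_fun f" "Re (f x) > 0"
  shows "((\<lambda>t. csqrt (f (x + t *\<^sub>R axis i 1))) has_vector_derivative
           pd i f x * inverse (2 * csqrt (f x))) (at 0)"
proof -
  have "f x \<notin> \<real>\<^sub>\<le>\<^sub>0" using assms(2) by (auto simp: complex_nonpos_Reals_iff)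
  hence "(csqrt has_field_derivative inverse (2 * csqrt (f x))) (at ((\<lambda>t. f (x + t *\<^sub>R axis i 1)) 0))"
    using has_field_derivative_csqrt by simp
  from field_vector_diff_chain_at[OF pd_has[OF assms(1)] this]
  show ?thesis by (simp add: o_def)
qed

lemma pd_sqrt:
  assumes "C1_fun f" "\<forall>y. Re (f y) > 0"
  shows "pd i (\<lambda>y. csqrt (f y)) = (\<lambda>y. pd i f y * inverse (2 * csqrt (f y)))"
  using pd_eqI[OF sqrt_line[OF assms(1)]] assms(2) by blast

lemma pd_sqrt2:
  assumes "C2_fun f" "\<forall>y. Re (f y) > 0"
  shows "pd i (pd i (\<lambda>y. csqrt (f y))) x =
    pd i (pd i f) x * inverse (2 * csqrt (f x)) +
    pd i f x * ((2 * (pd i f x * inverse (2 * csqrt (f x)))) * (- (inverse (2 * csqrt (f x)) ^ Suc (Suc 0))))"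
proof -
  have C1: "C1_fun f" and C1i: "C1_fun (pd i f)" using assms(1) unfolding C2_fun_def by auto
  have nz: "2 * csqrt (f x) \<noteq> 0" using assms(2) by (metis csqrt_eq_0 less_irrefl zero_complex.sel(1) mult_eq_0_iff zero_neq_numeral)
  have d1: "((\<lambda>t. 2 * csqrt (f (x + t *\<^sub>R axis i 1))) has_vector_derivative
           2 * (pd i f x * inverse (2 * csqrt (f x)))) (at 0)"
    by (rule has_vector_derivative_mult_right[OF sqrt_line[OF C1]]) (use assms(2) in auto)
  have "(inverse has_field_derivative - (inverse (2 * csqrt (f x)) ^ Suc (Suc 0)))
          (at ((\<lambda>t. 2 * csqrt (f (x + t *\<^sub>R axis i 1))) 0))"
    using DERIV_inverse[OF nz] by simp
  from field_vector_diff_chain_at[OF d1 this]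
  have d2: "((\<lambda>t. inverse (2 * csqrt (f (x + t *\<^sub>R axis i 1)))) has_vector_derivative
      (2 * (pd i f x * inverse (2 * csqrt (f x)))) * (- (inverse (2 * csqrt (f x)) ^ Suc (Suc 0)))) (at 0)"
    by (simp add: o_def)
  note d3 = has_vector_derivative_mult[OF pd_has[OF C1i] d2]
  show ?thesis
    unfolding pd_sqrt[OF C1 assms(2)]
    by (rule pd_eqI) (use d3 in \<open>simp add: algebra_simps\<close>)
qed

lemma pd_quot:
  assumes "C2_fun f" "\<forall>y. f y \<noteq> 0"
  shows "pd l (\<lambda>y. pd k f y / f y) x =
    pd l (pd k f) x * inverse (f x) + pd k f x * (pd l f x * (- (inverse (f x) ^ Suc (Suc 0))))"
proof -
  have C1: "C1_fun f" and C1k: "C1_fun (pd k f)" using assms(1) unfolding C2_fun_def by auto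
  note d3 = has_vector_derivative_mult[OF pd_has[OF C1k] inv_line[OF C1, of x l]]
  show ?thesis
    by (rule pd_eqI) (use d3 assms(2) in \<open>simp add: divide_inverse algebra_simps\<close>)
qed



lemma lap_alg:
  fixes s z a p :: complex
  assumes "s \<noteq> 0" "s * s = z"
  shows "(a * inverse (2 * s) + p * ((2 * (p * inverse (2 * s))) * (- (inverse (2 * s) ^ Suc (Suc 0))))) / s
     = a * inverse z / 2 - p^2 * inverse z ^ 2 / 4"
  using assms by (auto simp: field_simps power2_eq_square)

lemma final_ineq:
  fixes \<kappa> M \<beta> :: real
  assumes "\<kappa> > 0" "M \<ge> 1" "\<beta> \<ge> 1"
  shows "2*(\<kappa>\<^sup>2*(1+M)) + 3*(M*\<beta> + M*(M*\<beta>\<^sup>2)) + 3*(M*\<beta>/2 + M\<^sup>2*\<beta>\<^sup>2/4) + 6*(\<kappa>*\<beta>)*M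
     \<le> 15 * (1 + \<kappa>\<^sup>2) * \<beta>\<^sup>2 * M\<^sup>2"
proof -
  define W where "W = M\<^sup>2 * \<beta>\<^sup>2"
  have Mb: "M*\<beta> \<ge> 1" using mult_mono[of 1 M 1 \<beta>] assms by simp
  have We: "W = (M*\<beta>)*(M*\<beta>)" by (simp add: W_def power2_eq_square algebra_simps)
  have W1: "W \<ge> M*\<beta>" unfolding We using mult_right_mono[OF Mb, of "M*\<beta>"] Mb by simp
  have "M \<le> M*\<beta>" using mult_left_mono[of 1 \<beta> M] assms by simp
  hence W2: "W \<ge> M" using W1 by linarith
  have W3: "W \<ge> 1" using W1 Mb by linarith
  have k: "2*\<kappa> \<le> 1 + \<kappa>\<^sup>2" using sum_squares_ge_zero[of "\<kappa> - 1" 0]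
    by (simp add: power2_eq_square algebra_simps) 
  have t1: "2*(\<kappa>\<^sup>2*(1+M)) \<le> 4*\<kappa>\<^sup>2*W"
  proof -
    have "(1+M) \<le> 2*W" using W2 W3 by linarith
    hence "\<kappa>\<^sup>2*(1+M) \<le> \<kappa>\<^sup>2*(2*W)" by (rule mult_left_mono) simp
    thus ?thesis by (simp add: algebra_simps)
  qed
  have t2: "3*(M*\<beta> + M*(M*\<beta>\<^sup>2)) \<le> 6*W" using W1 by (simp add: W_def power2_eq_square algebra_simps)
  have t3: "3*(M*\<beta>/2 + M\<^sup>2*\<beta>\<^sup>2/4) \<le> 9/4*W" using W1 by (simp add: W_def)
  have t4: "6*(\<kappa>*\<beta>)*M \<le> 3*(1+\<kappa>\<^sup>2)*W"
  proof -
    have "6*(\<kappa>*\<beta>)*M = 3*(2*\<kappa>)*(M*\<beta>)" by simp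
    also have "\<dots> \<le> 3*(1+\<kappa>\<^sup>2)*W"
      by (intro mult_mono mult_left_mono k W1) (use assms Mb in auto)
    finally show ?thesis .
  qed
  have "15 * (1 + \<kappa>\<^sup>2) * \<beta>\<^sup>2 * M\<^sup>2 = 15 * (1 + \<kappa>\<^sup>2) * W" by (simp add: W_def)
  moreover have "2*(\<kappa>\<^sup>2*(1+M)) + 3*(M*\<beta> + M*(M*\<beta>\<^sup>2)) + 3*(M*\<beta>/2 + M\<^sup>2*\<beta>\<^sup>2/4) + 6*(\<kappa>*\<beta>)*M
     \<le> 4*\<kappa>\<^sup>2*W + 6*W + 9/4*W + 3*(1+\<kappa>\<^sup>2)*W" using t1 t2 t3 t4 by linarith
  moreover have "4*\<kappa>\<^sup>2*W + 6*W + 9/4*W + 3*(1+\<kappa>\<^sup>2)*W \<le> 15 * (1 + \<kappa>\<^sup>2) * W"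
  proof -
    have "0 \<le> \<kappa>\<^sup>2*W" using W3 by simp
    thus ?thesis using W3 by (simp add: algebra_simps add_nonneg_nonneg mult_nonneg_nonneg)
  qed
  ultimately show ?thesis by linarith
qed



lemma lap_term_bound:
  fixes a p w :: complex
  assumes "cmod a \<le> M" "cmod p \<le> M" "cmod w \<le> \<beta>"
  shows "cmod (a * w / 2 - p^2 * w^2 / 4) \<le> M*\<beta>/2 + M\<^sup>2*\<beta>\<^sup>2/4"
proof -
  have M0: "0 \<le> M" using assms(1) norm_ge_zero order_trans by blast
  have b0: "0 \<le> \<beta>" using assms(3) norm_ge_zero order_trans by blast
  have "cmod (a * w / 2 - p^2 * w^2 / 4) \<le> cmod (a * w / 2) + cmod (p^2 * w^2 / 4)"
    by (rule norm_triangle_ineq4)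
  also have "\<dots> = cmod a * cmod w / 2 + (cmod p)\<^sup>2 * (cmod w)\<^sup>2 / 4"
    by (simp add: norm_mult norm_divide norm_power)
  also have "\<dots> \<le> M*\<beta>/2 + M\<^sup>2*\<beta>\<^sup>2/4"
    using assms M0 b0 by (intro add_mono divide_right_mono mult_mono power_mono) auto
  finally show ?thesis .
qed

lemma jac_term_bound:
  fixes a p q w :: complex
  assumes "cmod a \<le> M" "cmod p \<le> M" "cmod q \<le> M" "cmod w \<le> \<beta>"
  shows "cmod (a * w + p * (q * (- (w ^ Suc (Suc 0))))) \<le> M*\<beta> + M*(M*\<beta>\<^sup>2)"
proof -
  have "cmod (a * w + p * (q * (- (w ^ Suc (Suc 0))))) \<le> cmod (a * w) + cmod (p * (q * (- (w ^ Suc (Suc 0)))))"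
    by (rule norm_triangle_ineq)
  also have "\<dots> = cmod a * cmod w + cmod p * (cmod q * (cmod w)\<^sup>2)"
    by (simp add: norm_mult norm_power power2_eq_square)
  also have "\<dots> \<le> M*\<beta> + M*(M*\<beta>\<^sup>2)"
    using assms by (intro add_mono mult_mono power_mono) (auto intro: order_trans[OF norm_ge_zero])
  finally show ?thesis .
qed

theorem lemmaA2:
  fixes \<alpha>0 \<kappa> b m Cm Lm :: real and n :: "real^3 \<Rightarrow> complex"
  assumes "0 < \<alpha>0" and "\<alpha>0 < 1"
    and "\<kappa> > 0" and "b > 0" and "m > 7/2"
    and "sobolev_const m Lm"
    and "admissible \<alpha>0 b n" and "in_Hm m n" and "C2_fun n"
    and "Hm_norm m n \<le> Cm"
  shows "\<forall>x\<in>ball 0 pi. Q_spec_norm \<kappa> n x \<le> 15 * (1 + \<kappa>\<^sup>2) * b powr (-2) * (Lm * Cm)\<^sup>2"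
proof
  fix x :: "real^3" assume xb: "x \<in> ball 0 pi"
  have C2: "C2_fun n" by fact
  have C1: "C1_fun n" using C2 unfolding C2_fun_def by simp
  have adm: "closure {x. n x \<noteq> 1} \<subseteq> ball 0 pi" "\<forall>x. Re (n x) \<ge> b \<and> Im (n x) \<ge> 0"
    using assms(7) unfolding admissible_def by auto
  have Rep: "\<forall>y. Re (n y) > 0" using adm(2) assms(4) by (meson less_le_trans)
  have nz: "\<forall>y. n y \<noteq> 0" using Rep by (metis less_irrefl zero_complex.sel(1))
  define h where "h = Hm_norm m n"
  have h0: "0 \<le> h" unfolding h_def Hm_norm_def
    by (simp add: infsum_nonneg Hm_weight_def)
  have sob: "\<forall>x\<in>cubeC. cmod (n x) \<le> Lm * h \<and> (\<forall>i. cmod (pd i n x) \<le> Lm * h) \<and>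
        (\<forall>i j. cmod (pd i (pd j n) x) \<le> Lm * h)"
    using assms(6,8,9) unfolding sobolev_const_def h_def by blast
  define y0 :: "real^3" where "y0 = (\<chi> i. 3)"
  have y0c: "y0 \<in> cubeC" unfolding cubeC_def y0_def mem_box_cart using pi_gt3 by auto
  have "norm y0 = sqrt 27" unfolding y0_def by (simp add: norm_vec_def L2_set_def sum_3)
  moreover have "pi < sqrt 27" using pi_less_4 real_less_rsqrt[of 4 27] by simp
  ultimately have "y0 \<notin> ball 0 pi" by simp
  moreover have "{x. n x \<noteq> 1} \<subseteq> ball 0 pi" by (rule order_trans[OF closure_subset adm(1)])
  ultimately have ny0: "n y0 = 1" by auto
  have "b \<le> Re (n y0)" using adm(2) by blast
  hence b1: "b \<le> 1" using ny0 by simp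
  have "cmod (n y0) \<le> Lm * h" using sob y0c by blast
  hence Lh1: "1 \<le> Lm * h" using ny0 by simp
  have Lm0: "0 \<le> Lm"
  proof (rule ccontr)
    assume "\<not> 0 \<le> Lm"
    hence "Lm*h \<le> 0" using h0 by (simp add: mult_nonpos_nonneg)
    thus False using Lh1 by linarith
  qed
  define M where "M = Lm * Cm"
  have hM: "Lm * h \<le> M" unfolding M_def h_def using mult_left_mono[OF assms(10) Lm0] by simp
  have M1: "1 \<le> M" using Lh1 hM by linarith
  have xc: "x \<in> cubeC"
  proof -
    have a: "\<bar>x $ i\<bar> < pi" for i using component_le_norm_cart[of x i] xb by simp
    have "- pi < x $ i \<and> x $ i < pi" for i using a[of i] by linarith
    thus ?thesis unfolding cubeC_def mem_box_cart by simp
  qed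
  have nM: "cmod (n x) \<le> M" and pM: "\<And>i. cmod (pd i n x) \<le> M" and ppM: "\<And>i j. cmod (pd i (pd j n) x) \<le> M"
    using sob xc hM by (blast intro: order_trans)+
  define \<beta> where "\<beta> = 1 / b"
  have \<beta>1: "\<beta> \<ge> 1" unfolding \<beta>_def using b1 assms(4) by simp
  have nb: "b \<le> cmod (n x)" using adm(2) by (blast intro: order_trans[OF _ complex_Re_le_cmod])
  have winv: "cmod (inverse (n x)) \<le> \<beta>"
    unfolding \<beta>_def norm_inverse using nb assms(4) by (simp add: divide_simps)
  define s where "s = csqrt (n x)"
  have ss: "s * s = n x" unfolding s_def by (metis power2_csqrt power2_eq_square)
  have s0: "s \<noteq> 0" using nz ss by auto
  have "b\<^sup>2 \<le> (cmod s)\<^sup>2"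
  proof -
    have "(cmod s)\<^sup>2 = cmod (n x)" by (metis ss norm_mult power2_eq_square)
    moreover have "b\<^sup>2 \<le> b" using b1 assms(4) by (simp add: power2_eq_square mult_left_le_one_le)
    ultimately show ?thesis using nb by linarith
  qed
  hence sb: "b \<le> cmod s" by (rule power2_le_imp_le) simp
  define d where "d = complex_of_real (\<kappa>\<^sup>2) * (1 - n x)"
  define c where "c = \<i> * complex_of_real \<kappa> / csqrt (n x)"
  define N where "N = crossmat (grad n x)"
  define J where "J = jac (\<lambda>y. \<chi> k. grad n y $ k / n y) x"
  define l where "l = laplace (\<lambda>y. csqrt (n y)) x / csqrt (n x)"
  define KJ where "KJ = M*\<beta> + M*(M*\<beta>\<^sup>2)"
  have Jb: "cmod (J$k$j) \<le> KJ" for k j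
  proof -
    have "J$k$j = pd j (\<lambda>y. pd k n y / n y) x" by (simp add: J_def jac_def grad_def)
    also have "\<dots> = pd j (pd k n) x * inverse (n x) + pd k n x * (pd j n x * (- (inverse (n x) ^ Suc (Suc 0))))"
      by (rule pd_quot[OF C2 nz])
    finally show ?thesis unfolding KJ_def using jac_term_bound ppM pM winv by metis
  qed
  have Nb: "cmod (N$k$j) \<le> M" for k j
    unfolding N_def crossmat_def grad_def using pM M1 by (simp add: norm_minus_cancel)
  have lb: "cmod l \<le> 3*(M*\<beta>/2 + M\<^sup>2*\<beta>\<^sup>2/4)"
  proof -
    define C where "C = M*\<beta>/2 + M\<^sup>2*\<beta>\<^sup>2/4"
    have tm: "pd i (pd i (\<lambda>y. csqrt (n y))) x / s = pd i (pd i n) x * inverse (n x) / 2 - (pd i n x)^2 * inverse (n x) ^ 2 / 4" for i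
      unfolding pd_sqrt2[OF C2 Rep] s_def[symmetric] by (rule lap_alg[OF s0 ss])
    have tb: "cmod (pd i (pd i (\<lambda>y. csqrt (n y))) x / s) \<le> C" for i
      unfolding tm C_def by (rule lap_term_bound[OF ppM pM winv])
    have "l = pd 1 (pd 1 (\<lambda>y. csqrt (n y))) x / s + pd 2 (pd 2 (\<lambda>y. csqrt (n y))) x / s + pd 3 (pd 3 (\<lambda>y. csqrt (n y))) x / s"
      by (simp add: l_def laplace_def sum_3 s_def add_divide_distrib)
    hence "cmod l \<le> cmod (pd 1 (pd 1 (\<lambda>y. csqrt (n y))) x / s) + cmod (pd 2 (pd 2 (\<lambda>y. csqrt (n y))) x / s) + cmod (pd 3 (pd 3 (\<lambda>y. csqrt (n y))) x / s)"
      using tri3 by simp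
    thus ?thesis using tb[of 1] tb[of 2] tb[of 3] unfolding C_def[symmetric] by linarith
  qed
  have db: "cmod d \<le> \<kappa>\<^sup>2 * (1 + M)"
  proof -
    have "cmod (1 - n x) \<le> 1 + M" using norm_triangle_ineq4[of 1 "n x"] nM by simp
    moreover have "cmod d = \<kappa>\<^sup>2 * cmod (1 - n x)" unfolding d_def
      by (simp only: norm_mult norm_of_real) simp
    ultimately show ?thesis by (simp add: mult_left_mono)
  qed
  have cb: "cmod c \<le> \<kappa> * \<beta>"
  proof -
    have "cmod c = \<kappa> / cmod s" unfolding c_def s_def using assms(3) by (simp add: norm_mult norm_divide)
    also have "\<dots> \<le> \<kappa> / b" using sb assms(3,4) by (simp add: frac_le)
    finally show ?thesis by (simp add: \<beta>_def)
  qed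
  define T where "T = 2*cmod d + 3*KJ + cmod l + 6*cmod c*M"
  have "Q_spec_norm \<kappa> n x \<le> T"
    unfolding Q_spec_norm_def
  proof (rule onorm_le)
    fix p :: "(complex^3) \<times> (complex^3)"
    obtain E H where p: "p = (E, H)" by fastforce
    have "Qop \<kappa> n x p = ((mat d + (- J + mat l)) *v E + (\<chi> k l. - c * N $ k $ l) *v H,
                (\<chi> k l. c * N $ k $ l) *v E + mat d *v H)"
      unfolding p Qop_def Let_def d_def c_def N_def J_def l_def by simp
    thus "norm (Qop \<kappa> n x p) \<le> T * norm p"
      unfolding T_def p using block_bound[OF Jb Nb] by simp
  qed
  also have "T \<le> 2*(\<kappa>\<^sup>2*(1+M)) + 3*(M*\<beta> + M*(M*\<beta>\<^sup>2)) + 3*(M*\<beta>/2 + M\<^sup>2*\<beta>\<^sup>2/4) + 6*(\<kappa>*\<beta>)*M"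
    unfolding T_def KJ_def using db lb cb M1 by (intro add_mono mult_right_mono mult_left_mono) auto
  also have "\<dots> \<le> 15 * (1 + \<kappa>\<^sup>2) * \<beta>\<^sup>2 * M\<^sup>2" by (rule final_ineq[OF assms(3) M1 \<beta>1])
  also have "\<dots> = 15 * (1 + \<kappa>\<^sup>2) * b powr (-2) * (Lm * Cm)\<^sup>2"
    using assms(4) by (simp add: M_def \<beta>_def powr_minus power_one_over powr_realpow divide_inverse power_inverse)
  finally show "Q_spec_norm \<kappa> n x \<le> 15 * (1 + \<kappa>\<^sup>2) * b powr (-2) * (Lm * Cm)\<^sup>2" .
qed

end
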